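(* The interacting particle system is non-explosive: for every $f\in F_0(G)$, $$P_f\Big(\sum_{n=1}^\infty\xi_n=\infty\Big)=1 .$$
   Context: A graph is a quadruple $G=(V,E,K,m)$: $V$ is a finite or countable set of nodes, which are elements of a real Hilbert space $\mathcal H$ with inner product "$\cdot$" and norm $|\cdot|$; $E$ is a set of undirected edges (at most one edge between any two distinct nodes, no self-loops); the edge between $x$ and $y$ is written $\langle x,y\rangle=\langle y,x\rangle$, and $y\sim x$ means this edge exists; $K=(k_{xy})_{x,y\in V}$ with $k_{xy}=k_{yx}\ge0$ and $k_{xy}=0$ if there is no edge; $m=(m_x)_{x\in V}$ with $m_x>0$. Let $e_{xy}=(y-x)/|y-x|$. Assume $d_0=\sup_{x\in V}\#\{y:y\sim x\}<\infty$, set $d=\max\{d_0,2\}$, and assume $M=\max\{\sup_{x\in V}m_x^{-1},\sup_{\langle x,y\rangle\in E}k_{xy}\}<\infty$. $V=V_0\cup V_1$ is a fixed partition into disjoint sets. $F(G)$ is the set of functions $f$ assigning a real number $f(x)$ to each $x\in V$ and a vector $f(\langle x,y\rangle)\in\mathcal H$ that is a real multiple of $y-x$ to each edge. For $1\le\alpha<\infty$, $\|f\|_\alpha=\big(\sum_{x\in V}|f(x)|^\alpha/m_x+\sum_{\langle x,y\rangle\in E}k_{xy}|f(\langle x,y\rangle)|^\alpha\big)^{1/\alpha}$, and $\|f\|_\infty=\max\{\sup_x|f(x)|,\sup_{\langle x,y\rangle}|f(\langle x,y\rangle)|\}$. $F_0(G)$ is the set of $f\in F(G)$ with finitely many nonzero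 values such that $|f(x)|\in\mathbb Z$ and $|f(\langle x,y\rangle)|\in\mathbb Z$ for all nodes and edges. The interacting particle system (IPS) $(f_t)_{t\ge0}$ is the continuous-time Markov jump process on $F_0(G)$ with the following transitions from state $f$: (i) for each $x\in V$, at rate $|f(x)|/m_x$, for every $y\sim x$ the edge value $f(\langle x,y\rangle)$ is replaced by $f(\langle x,y\rangle)+\mathrm{sgn}(f(x))\,e_{yx}$ (all other values unchanged); (ii) for each edge $\langle x,y\rangle$, at rate $k_{xy}|f(\langle x,y\rangle)|$, with $s=\mathrm{sgn}(f(\langle x,y\rangle)\cdot e_{xy})$, the value $f(x)$ is replaced by $f(x)+s$ if $x\in V_0$ and $f(y)$ by $f(y)-s$ if $y\in V_0$ (values at nodes of $V_1$ never change; this rule is symmetric in $x,y$). $P_f,\mathbb E_f$ denote probability and expectation given $f_0=f$. $\tau_0=0$, $\tau_n$ is the time of the $n$-th jump, $\xi_n=\tau_n-\tau_{n-1}$, $h_n=f_{\tau_n}$, and $\eta_t=\sup\{n:\tau_n\le t\}$. *)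

theory Defs
  imports "HOL-Probability.Probability"
begin

text \<open>Graph encoding: nodes V are points of a real Hilbert space 'h; the edge set E is a
set of two-element subsets {x,y} of V; the conductances k and edge values are indexed by
the unordered edge {x,y}.\<close>

type_synonym 'h ips_state = "('h \<Rightarrow> real) \<times> ('h set \<Rightarrow> 'h)"

definition unitv :: "'h::real_normed_vector \<Rightarrow> 'h \<Rightarrow> 'h" where
  "unitv x y = (1 / norm (y - x)) *\<^sub>R (y - x)"

definition good_graph ::
  "'h::{real_inner,complete_space} set \<Rightarrow> 'h set set \<Rightarrow> ('h set \<Rightarrow> real) \<Rightarrow> ('h \<Rightarrow> real) \<Rightarrow> 'h set \<Rightarrow> bool" where
  "good_graph V E k m V0 \<longleftrightarrow>
     countable V \<and>
     (\<forall>\<epsilon>\<in>E. \<exists>x y. \<epsilon> = {x, y} \<and> x \<in> V \<and> y \<in> V \<and> x \<noteq> y) \<and>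
     (\<forall>\<epsilon>\<in>E. k \<epsilon> \<ge> 0) \<and>
     (\<forall>x\<in>V. m x > 0) \<and>
     (\<exists>D::nat. \<forall>x\<in>V. finite {y. {x, y} \<in> E} \<and> card {y. {x, y} \<in> E} \<le> D) \<and>
     (\<exists>B::real. (\<forall>x\<in>V. 1 / m x \<le> B) \<and> (\<forall>\<epsilon>\<in>E. k \<epsilon> \<le> B)) \<and>
     V0 \<subseteq> V"

definition F0 :: "'h::real_inner set \<Rightarrow> 'h set set \<Rightarrow> 'h ips_state set" where
  "F0 V E = {(f, fe).
     (\<forall>x. x \<notin> V \<longrightarrow> f x = 0) \<and> (\<forall>\<epsilon>. \<epsilon> \<notin> E \<longrightarrow> fe \<epsilon> = 0) \<and>
     finite {x. f x \<noteq> 0} \<and> finite {\<epsilon>. fe \<epsilon> \<noteq> 0} \<and>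
     (\<forall>x y. {x, y} \<in> E \<longrightarrow> (\<exists>c::real. fe {x, y} = c *\<^sub>R (y - x))) \<and>
     (\<forall>x. \<bar>f x\<bar> \<in> \<int>) \<and> (\<forall>\<epsilon>. norm (fe \<epsilon>) \<in> \<int>)}"

definition node_step :: "'h set set \<Rightarrow> 'h::real_inner \<Rightarrow> 'h ips_state \<Rightarrow> 'h ips_state" where
  "node_step E x st = (case st of (f, fe) \<Rightarrow>
     (f, \<lambda>\<epsilon>. if \<epsilon> \<in> E \<and> x \<in> \<epsilon> then fe \<epsilon> + sgn (f x) *\<^sub>R unitv (the_elem (\<epsilon> - {x})) x
              else fe \<epsilon>))"

definition edge_step_or :: "'h set \<Rightarrow> 'h::real_inner \<Rightarrow> 'h \<Rightarrow> 'h ips_state \<Rightarrow> 'h ips_state" where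
  "edge_step_or V0 x y st = (case st of (f, fe) \<Rightarrow>
     (let s = sgn (fe {x, y} \<bullet> unitv x y) in
      (\<lambda>z. if z = x \<and> x \<in> V0 then f x + s
           else if z = y \<and> y \<in> V0 then f y - s else f z, fe)))"

text \<open>Transition (ii) for the unordered edge (the rule is symmetric in x,y).\<close>
definition edge_step :: "'h set \<Rightarrow> 'h::real_inner set \<Rightarrow> 'h ips_state \<Rightarrow> 'h ips_state" where
  "edge_step V0 \<epsilon> st = (THE g. \<exists>x y. \<epsilon> = {x, y} \<and> x \<noteq> y \<and> g = edge_step_or V0 x y st)"

definition total_rate ::
  "'h set \<Rightarrow> 'h set set \<Rightarrow> ('h set \<Rightarrow> real) \<Rightarrow> ('h \<Rightarrow> real) \<Rightarrow> 'h::real_inner ips_state \<Rightarrow> real" where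
  "total_rate V E k m st = (case st of (f, fe) \<Rightarrow>
     (\<Sum>x\<in>{x\<in>V. f x \<noteq> 0}. \<bar>f x\<bar> / m x) + (\<Sum>\<epsilon>\<in>{\<epsilon>\<in>E. fe \<epsilon> \<noteq> 0}. k \<epsilon> * norm (fe \<epsilon>)))"

definition jump_rate ::
  "'h set \<Rightarrow> 'h set set \<Rightarrow> ('h set \<Rightarrow> real) \<Rightarrow> ('h \<Rightarrow> real) \<Rightarrow> 'h set \<Rightarrow>
   'h::real_inner ips_state \<Rightarrow> 'h ips_state \<Rightarrow> real" where
  "jump_rate V E k m V0 st st' = (case st of (f, fe) \<Rightarrow>
     (\<Sum>x\<in>{x\<in>V. f x \<noteq> 0}. if node_step E x st = st' then \<bar>f x\<bar> / m x else 0) +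
     (\<Sum>\<epsilon>\<in>{\<epsilon>\<in>E. fe \<epsilon> \<noteq> 0}. if edge_step V0 \<epsilon> st = st' then k \<epsilon> * norm (fe \<epsilon>) else 0))"

definition jump_prob ::
  "'h set \<Rightarrow> 'h set set \<Rightarrow> ('h set \<Rightarrow> real) \<Rightarrow> ('h \<Rightarrow> real) \<Rightarrow> 'h set \<Rightarrow>
   'h::real_inner ips_state \<Rightarrow> 'h ips_state \<Rightarrow> real" where
  "jump_prob V E k m V0 st st' =
     (if total_rate V E k m st = 0 then (if st' = st then 1 else 0)
      else jump_rate V E k m V0 st st' / total_rate V E k m st)"

text \<open>(h_n, xi_n) on the probability space M is a realisation of the IPS started at f:
h n = f_{tau_n} is the jump chain, xi n = tau_n - tau_(n-1) (n \<ge> 1) the holding times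
(xi = \<infinity> once the chain is absorbed). Their joint law is fixed through all finite-dimensional
distributions: given h_0..h_(n-1), the next state is chosen with the jump-chain probabilities
and the holding time in h_(i-1) is exponential with parameter the total rate, independently.\<close>
definition is_IPS ::
  "'h set \<Rightarrow> 'h set set \<Rightarrow> ('h set \<Rightarrow> real) \<Rightarrow> ('h \<Rightarrow> real) \<Rightarrow> 'h set \<Rightarrow> 'h::real_inner ips_state \<Rightarrow>
   'w measure \<Rightarrow> (nat \<Rightarrow> 'w \<Rightarrow> 'h ips_state) \<Rightarrow> (nat \<Rightarrow> 'w \<Rightarrow> ennreal) \<Rightarrow> bool" where
  "is_IPS V E k m V0 f M h \<xi> \<longleftrightarrow>
     prob_space M \<and>
     (\<forall>n. h n \<in> M \<rightarrow>\<^sub>M count_space UNIV) \<and>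
     (\<forall>n. \<xi> n \<in> borel_measurable M) \<and>
     (\<forall>(n::nat) (g::nat \<Rightarrow> 'h ips_state) (t::nat \<Rightarrow> real).
        (\<forall>i\<in>{1..n}. t i \<ge> 0) \<longrightarrow>
        measure M {\<omega> \<in> space M. (\<forall>i\<le>n. h i \<omega> = g i) \<and> (\<forall>i\<in>{1..n}. \<xi> i \<omega> > ennreal (t i))}
        = (if g 0 = f then 1 else 0) *
          (\<Prod>i\<in>{1..n}. jump_prob V E k m V0 (g (i - 1)) (g i)
                         * exp (- total_rate V E k m (g (i - 1)) * t i)))"

end

theory Submission
  imports Defs "HOL-Analysis.Harmonic_Numbers"
begin


locale ipsl =
  fixes V :: "'h::{real_inner,complete_space} set"
    and E :: "'h set set" and k :: "'h set \<Rightarrow> real" and m :: "'h \<Rightarrow> real" and V0 :: "'h set"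
    and f :: "'h ips_state"
    and M :: "'w measure" and h :: "nat \<Rightarrow> 'w \<Rightarrow> 'h ips_state" and \<xi> :: "nat \<Rightarrow> 'w \<Rightarrow> ennreal"
  assumes good: "good_graph V E k m V0"
    and fF0: "f \<in> F0 V E"
    and ips: "is_IPS V E k m V0 f M h \<xi>"
begin

sublocale prob_space M using ips unfolding is_IPS_def by auto

lemma h_meas[measurable]: "h i \<in> M \<rightarrow>\<^sub>M count_space UNIV"
  using ips unfolding is_IPS_def by auto
lemma xi_meas[measurable]: "\<xi> i \<in> borel_measurable M"
  using ips unfolding is_IPS_def by auto

abbreviation "tr \<equiv> total_rate V E k m"
abbreviation "jp \<equiv> jump_prob V E k m V0"

definition P0 :: "(nat \<Rightarrow> 'h ips_state) \<Rightarrow> nat \<Rightarrow> real" where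
  "P0 g n = (if g 0 = f then 1 else 0) * (\<Prod>i\<in>{1..n}. jp (g (i - 1)) (g i))"

definition Ev :: "(nat \<Rightarrow> 'h ips_state) \<Rightarrow> nat \<Rightarrow> nat set \<Rightarrow> (nat \<Rightarrow> real) \<Rightarrow> 'w set" where
  "Ev g n J t = {\<omega>\<in>space M. (\<forall>i\<le>n. h i \<omega> = g i) \<and>
     (\<forall>i\<in>{1..n}. if i \<in> J then 0 < \<xi> i \<omega> \<and> \<xi> i \<omega> \<le> ennreal (t i) else ennreal (t i) < \<xi> i \<omega>)}"

lemma Ev_sets[measurable]: "Ev g n J t \<in> sets M"
  unfolding Ev_def by measurable

lemma ips_formula:
  assumes "\<forall>i\<in>{1..n}. t i \<ge> 0"
  shows "measure M {\<omega> \<in> space M. (\<forall>i\<le>n. h i \<omega> = g i) \<and> (\<forall>i\<in>{1..n}. \<xi> i \<omega> > ennreal (t i))}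
        = P0 g n * (\<Prod>i\<in>{1..n}. exp (- tr (g (i - 1)) * t i))"
  using ips assms unfolding is_IPS_def P0_def by (simp add: prod.distrib)

lemma Ev_measure:
  assumes "finite J" "J \<subseteq> {1..n}" "\<forall>i\<in>{1..n}. t i \<ge> 0"
  shows "measure M (Ev g n J t) = P0 g n * (\<Prod>i\<in>{1..n}-J. exp (- tr (g (i - 1)) * t i))
            * (\<Prod>i\<in>J. 1 - exp (- tr (g (i - 1)) * t i))"
  using assms
proof (induction J arbitrary: t rule: finite_induct)
  case empty
  have "Ev g n {} t = {\<omega> \<in> space M. (\<forall>i\<le>n. h i \<omega> = g i) \<and> (\<forall>i\<in>{1..n}. \<xi> i \<omega> > ennreal (t i))}"
    unfolding Ev_def by auto
  then show ?case using ips_formula[OF empty(2)] by simp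
next
  case (insert j J)
  let ?t0 = "t(j := 0)"
  have t0: "\<forall>i\<in>{1..n}. ?t0 i \<ge> 0" using insert by auto
  have j: "j \<in> {1..n}" using insert by auto
  have eq: "Ev g n (insert j J) t = Ev g n J ?t0 - Ev g n J t"
  proof (rule set_eqI)
    fix \<omega>
    let ?C = "\<lambda>J t i. if i \<in> J then 0 < \<xi> i \<omega> \<and> \<xi> i \<omega> \<le> ennreal (t i) else ennreal (t i) < \<xi> i \<omega>"
    have o: "\<And>i. i \<noteq> j \<Longrightarrow> (?C (insert j J) t i \<longleftrightarrow> ?C J t i) \<and> (?C J ?t0 i \<longleftrightarrow> ?C J t i)" by simp
    have jj: "?C (insert j J) t j \<longleftrightarrow> ?C J ?t0 j \<and> \<not> ?C J t j" using insert(2) by (simp add: not_less)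
    have "(\<forall>i\<in>{1..n}. ?C (insert j J) t i) \<longleftrightarrow> (\<forall>i\<in>{1..n}. ?C J ?t0 i) \<and> \<not> (\<forall>i\<in>{1..n}. ?C J t i)"
    proof
      assume a: "\<forall>i\<in>{1..n}. ?C (insert j J) t i"
      show "(\<forall>i\<in>{1..n}. ?C J ?t0 i) \<and> \<not> (\<forall>i\<in>{1..n}. ?C J t i)"
      proof
        show "\<forall>i\<in>{1..n}. ?C J ?t0 i"
        proof
          fix i assume i: "i \<in> {1..n}"
          show "?C J ?t0 i" proof (cases "i = j")
            case True then show ?thesis using jj a i by blast
          next
            case False then show ?thesis using o[OF False] a i by blast
          qed
        qed
        show "\<not> (\<forall>i\<in>{1..n}. ?C J t i)" using a jj j by blast
      qed
    next
      assume a: "(\<forall>i\<in>{1..n}. ?C J ?t0 i) \<and> \<not> (\<forall>i\<in>{1..n}. ?C J t i)"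
      show "\<forall>i\<in>{1..n}. ?C (insert j J) t i"
      proof
        fix i assume i: "i \<in> {1..n}"
        have "\<not> ?C J t j"
        proof
          assume cj: "?C J t j"
          have "\<forall>i\<in>{1..n}. ?C J t i"
          proof
            fix i' assume i': "i' \<in> {1..n}"
            show "?C J t i'" proof (cases "i' = j")
              case True then show ?thesis using cj by simp
            next
              case False then show ?thesis using o[OF False] a i' by blast
            qed
          qed
          then show False using a by blast
        qed
        show "?C (insert j J) t i" proof (cases "i = j")
          case True then show ?thesis using jj a i \<open>\<not> ?C J t j\<close> by blast
        next
          case False then show ?thesis using o[OF False] a i by blast
        qed
      qed
    qed
    then show "\<omega> \<in> Ev g n (insert j J) t \<longleftrightarrow> \<omega> \<in> Ev g n J ?t0 - Ev g n J t"
      unfolding Ev_def by blast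
  qed
  have sub: "Ev g n J t \<subseteq> Ev g n J ?t0"
    using j insert(2) insert(5) unfolding Ev_def
    by (auto intro: order.strict_trans1[rotated])
  have "measure M (Ev g n (insert j J) t) = measure M (Ev g n J ?t0) - measure M (Ev g n J t)"
    unfolding eq by (rule finite_measure_Diff) (use sub in auto)
  also have "\<dots> = P0 g n * (\<Prod>i\<in>{1..n}-J. exp (- tr (g (i - 1)) * ?t0 i)) * (\<Prod>i\<in>J. 1 - exp (- tr (g (i - 1)) * ?t0 i))
      - P0 g n * (\<Prod>i\<in>{1..n}-J. exp (- tr (g (i - 1)) * t i)) * (\<Prod>i\<in>J. 1 - exp (- tr (g (i - 1)) * t i))"
    using insert(4) by (simp only: insert.IH[OF _ t0] insert.IH[OF _ insert(5)] insert_subset)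
  also have "\<dots> = P0 g n * (\<Prod>i\<in>{1..n}-insert j J. exp (- tr (g (i - 1)) * t i))
            * (\<Prod>i\<in>insert j J. 1 - exp (- tr (g (i - 1)) * t i))"
  proof -
    have A: "{1..n}-J = insert j ({1..n} - insert j J)" using j insert(2) by auto
    have B: "(\<Prod>i\<in>J. 1 - exp (- tr (g (i - 1)) * ?t0 i)) = (\<Prod>i\<in>J. 1 - exp (- tr (g (i - 1)) * t i))"
      using insert(2) by (intro prod.cong) auto
    have C: "(\<Prod>i\<in>{1..n}-insert j J. exp (- tr (g (i - 1)) * ?t0 i)) = (\<Prod>i\<in>{1..n}-insert j J. exp (- tr (g (i - 1)) * t i))"
      by (intro prod.cong) auto
    show ?thesis unfolding A B using insert(1,2)
      by (simp add: C algebra_simps)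
  qed
  finally show ?case .
qed

end



context ipsl begin

lemma good': "countable V \<and>
     (\<forall>\<epsilon>\<in>E. \<exists>x y. \<epsilon> = {x, y} \<and> x \<in> V \<and> y \<in> V \<and> x \<noteq> y) \<and>
     (\<forall>\<epsilon>\<in>E. k \<epsilon> \<ge> 0) \<and>
     (\<forall>x\<in>V. m x > 0) \<and>
     (\<exists>D::nat. \<forall>x\<in>V. finite {y. {x, y} \<in> E} \<and> card {y. {x, y} \<in> E} \<le> D) \<and>
     (\<exists>B::real. (\<forall>x\<in>V. 1 / m x \<le> B) \<and> (\<forall>\<epsilon>\<in>E. k \<epsilon> \<le> B)) \<and>
     V0 \<subseteq> V" using good unfolding good_graph_def .
lemma gE: "\<epsilon> \<in> E \<Longrightarrow> \<exists>x y. \<epsilon> = {x, y} \<and> x \<in> V \<and> y \<in> V \<and> x \<noteq> y"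
  using good' by (elim conjE) (erule bspec)
lemma k_nonneg: "\<epsilon> \<in> E \<Longrightarrow> k \<epsilon> \<ge> 0"
  using good' by (elim conjE) (erule bspec)
lemma m_pos: "x \<in> V \<Longrightarrow> m x > 0"
  using good' by (elim conjE) (erule bspec)
definition "Dg = (SOME D::nat. \<forall>x\<in>V. finite {y. {x, y} \<in> E} \<and> card {y. {x, y} \<in> E} \<le> D)"
definition "Bg0 = (SOME B::real. (\<forall>x\<in>V. 1 / m x \<le> B) \<and> (\<forall>\<epsilon>\<in>E. k \<epsilon> \<le> B))"
definition "Bg = max Bg0 0"

lemma Dg: "x \<in> V \<Longrightarrow> finite {y. {x, y} \<in> E} \<and> card {y. {x, y} \<in> E} \<le> Dg"
proof -
  have "\<exists>D::nat. \<forall>x\<in>V. finite {y. {x, y} \<in> E} \<and> card {y. {x, y} \<in> E} \<le> D"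
    using good' by (elim conjE) assumption
  from someI_ex[OF this] show "x \<in> V \<Longrightarrow> ?thesis" unfolding Dg_def by blast
qed

lemma Bg: "x \<in> V \<Longrightarrow> 1 / m x \<le> Bg" "\<epsilon> \<in> E \<Longrightarrow> k \<epsilon> \<le> Bg" "Bg \<ge> 0"
proof -
  have "\<exists>B::real. (\<forall>x\<in>V. 1 / m x \<le> B) \<and> (\<forall>\<epsilon>\<in>E. k \<epsilon> \<le> B)"
    using good' by (elim conjE) assumption
  from someI_ex[OF this] have "(\<forall>x\<in>V. 1 / m x \<le> Bg0) \<and> (\<forall>\<epsilon>\<in>E. k \<epsilon> \<le> Bg0)"
    unfolding Bg0_def by blast
  then show "x \<in> V \<Longrightarrow> 1 / m x \<le> Bg" "\<epsilon> \<in> E \<Longrightarrow> k \<epsilon> \<le> Bg" "Bg \<ge> 0"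
    unfolding Bg_def by auto
qed

definition "Inc x = {\<epsilon>\<in>E. x \<in> \<epsilon>}"

lemma Inc_fin: "finite (Inc x) \<and> card (Inc x) \<le> Dg"
proof (cases "x \<in> V")
  case True
  have eq: "Inc x = (\<lambda>y. {x, y}) ` {y. {x, y} \<in> E}"
  proof
    show "Inc x \<subseteq> (\<lambda>y. {x, y}) ` {y. {x, y} \<in> E}"
    proof
      fix \<epsilon> assume e: "\<epsilon> \<in> Inc x"
      then obtain a b where ab: "\<epsilon> = {a, b}" "\<epsilon> \<in> E" "x \<in> \<epsilon>" using gE unfolding Inc_def by blast
      then show "\<epsilon> \<in> (\<lambda>y. {x, y}) ` {y. {x, y} \<in> E}"
        by (auto simp: insert_commute)
    qed
  qed (auto simp: Inc_def)
  show ?thesis unfolding eq using Dg[OF True] card_image_le le_trans by blast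
next
  case False
  have "Inc x = {}" using gE False unfolding Inc_def by blast
  then show ?thesis by simp
qed

definition NP :: "('h \<Rightarrow> real) \<Rightarrow> real" where
  "NP a = (\<Sum>x\<in>{x\<in>V. a x \<noteq> 0}. \<bar>a x\<bar> / m x)"
definition EP :: "('h set \<Rightarrow> 'h) \<Rightarrow> real" where
  "EP b = (\<Sum>\<epsilon>\<in>{\<epsilon>\<in>E. b \<epsilon> \<noteq> 0}. k \<epsilon> * norm (b \<epsilon>))"

lemma tr_split: "tr st = NP (fst st) + EP (snd st)"
  by (cases st) (simp add: total_rate_def NP_def EP_def)

definition fin :: "'h ips_state \<Rightarrow> bool" where
  "fin st \<longleftrightarrow> finite {x\<in>V. fst st x \<noteq> 0} \<and> finite {\<epsilon>\<in>E. snd st \<epsilon> \<noteq> 0}"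

lemma NP_sup: "finite S \<Longrightarrow> {x\<in>V. a x \<noteq> 0} \<subseteq> S \<Longrightarrow> S \<subseteq> V \<Longrightarrow> NP a = (\<Sum>x\<in>S. \<bar>a x\<bar> / m x)"
  unfolding NP_def by (rule sum.mono_neutral_left) auto

lemma EP_sup: "finite S \<Longrightarrow> {\<epsilon>\<in>E. b \<epsilon> \<noteq> 0} \<subseteq> S \<Longrightarrow> S \<subseteq> E \<Longrightarrow> EP b = (\<Sum>\<epsilon>\<in>S. k \<epsilon> * norm (b \<epsilon>))"
  unfolding EP_def by (rule sum.mono_neutral_left) auto

lemma NP_nonneg: "NP a \<ge> 0"
  unfolding NP_def by (intro sum_nonneg) (auto intro!: divide_nonneg_pos m_pos)
lemma EP_nonneg: "EP b \<ge> 0"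
  unfolding EP_def by (intro sum_nonneg) (auto intro!: mult_nonneg_nonneg k_nonneg)
lemma tr_nonneg: "tr st \<ge> 0"
  using NP_nonneg EP_nonneg tr_split by (simp add: add_nonneg_nonneg)

lemma norm_unitv_le: "norm (unitv a b) \<le> 1"
proof -
  have "norm (unitv a b) = (1 / norm (b - a)) * norm (b - a)" by (simp add: unitv_def)
  then show ?thesis by (cases "norm (b - a) = 0") auto
qed

lemma norm_sgn_unitv: "norm (sgn r *\<^sub>R unitv a b) \<le> 1"
proof -
  have "\<bar>sgn r\<bar> \<le> (1::real)" by (simp add: abs_sgn_eq)
  moreover have "norm (sgn r *\<^sub>R unitv a b) = \<bar>sgn r\<bar> * norm (unitv a b)" by simp
  ultimately show ?thesis using norm_unitv_le[of a b]
    by (metis abs_ge_zero mult_le_one norm_ge_zero)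
qed

lemma node_step_eq: "node_step E x (a, b) = (a, \<lambda>\<epsilon>. if \<epsilon> \<in> Inc x then b \<epsilon> + sgn (a x) *\<^sub>R unitv (the_elem (\<epsilon> - {x})) x else b \<epsilon>)"
  unfolding node_step_def Inc_def by simp

lemma node_step_snd: "\<epsilon> \<notin> Inc x \<Longrightarrow> snd (node_step E x st) \<epsilon> = snd st \<epsilon>"
  by (cases st) (simp add: node_step_eq)
lemma node_step_fst: "fst (node_step E x st) = fst st"
  by (cases st) (simp add: node_step_eq)

lemma node_step_fin:
  assumes "fin st" shows "fin (node_step E x st)"
proof -
  have sub: "{\<epsilon>\<in>E. snd (node_step E x st) \<epsilon> \<noteq> 0} \<subseteq> {\<epsilon>\<in>E. snd st \<epsilon> \<noteq> 0} \<union> Inc x"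
  proof
    fix \<epsilon> assume e: "\<epsilon> \<in> {\<epsilon>\<in>E. snd (node_step E x st) \<epsilon> \<noteq> 0}"
    show "\<epsilon> \<in> {\<epsilon>\<in>E. snd st \<epsilon> \<noteq> 0} \<union> Inc x"
    proof (cases "\<epsilon> \<in> Inc x")
      case False
      then show ?thesis using e node_step_snd[OF False, of st] by simp
    qed simp
  qed
  have "finite ({\<epsilon>\<in>E. snd st \<epsilon> \<noteq> 0} \<union> Inc x)" using assms Inc_fin unfolding fin_def by blast
  then have "finite {\<epsilon>\<in>E. snd (node_step E x st) \<epsilon> \<noteq> 0}" using sub finite_subset by blast
  then show ?thesis using assms unfolding fin_def node_step_fst by blast
qed

lemma node_step_tr:
  assumes "fin st" shows "tr (node_step E x st) \<le> tr st + Bg * Dg"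
proof -
  obtain a b where st: "st = (a, b)" by fastforce
  define b' where "b' = snd (node_step E x st)"
  have b': "b' = (\<lambda>\<epsilon>. if \<epsilon> \<in> Inc x then b \<epsilon> + sgn (a x) *\<^sub>R unitv (the_elem (\<epsilon> - {x})) x else b \<epsilon>)"
    unfolding b'_def st node_step_eq by simp
  define S where "S = {\<epsilon>\<in>E. b \<epsilon> \<noteq> 0} \<union> Inc x"
  have finS: "finite S" using assms Inc_fin unfolding S_def fin_def st by auto
  have SE: "S \<subseteq> E" unfolding S_def Inc_def by auto
  have "EP b' = (\<Sum>\<epsilon>\<in>S. k \<epsilon> * norm (b' \<epsilon>))"
    by (rule EP_sup[OF finS _ SE]) (auto simp: b' S_def split: if_splits)
  also have "\<dots> \<le> (\<Sum>\<epsilon>\<in>S. k \<epsilon> * norm (b \<epsilon>) + (if \<epsilon> \<in> Inc x then Bg else 0))"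
  proof (rule sum_mono)
    fix \<epsilon> assume e: "\<epsilon> \<in> S"
    then have ke: "0 \<le> k \<epsilon>" "k \<epsilon> \<le> Bg" using SE k_nonneg Bg by auto
    show "k \<epsilon> * norm (b' \<epsilon>) \<le> k \<epsilon> * norm (b \<epsilon>) + (if \<epsilon> \<in> Inc x then Bg else 0)"
    proof (cases "\<epsilon> \<in> Inc x")
      case True
      have "norm (b' \<epsilon>) \<le> norm (b \<epsilon>) + 1"
        using True norm_triangle_ineq[of "b \<epsilon>" "sgn (a x) *\<^sub>R unitv (the_elem (\<epsilon> - {x})) x"]
          norm_sgn_unitv[of "a x" "the_elem (\<epsilon> - {x})" x] by (simp add: b')
      then have "k \<epsilon> * norm (b' \<epsilon>) \<le> k \<epsilon> * (norm (b \<epsilon>) + 1)" using ke by (simp add: mult_left_mono)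
      then show ?thesis using True ke by (simp add: algebra_simps)
    qed (simp add: b')
  qed
  also have "\<dots> = EP b + Bg * card (Inc x)"
  proof -
    have "(\<Sum>\<epsilon>\<in>S. (if \<epsilon> \<in> Inc x then Bg else 0)) = (\<Sum>\<epsilon>\<in>Inc x. Bg)"
      using finS by (subst sum.inter_restrict[symmetric]) (auto simp: S_def intro!: sum.cong)
    moreover have "EP b = (\<Sum>\<epsilon>\<in>S. k \<epsilon> * norm (b \<epsilon>))"
      by (rule EP_sup[OF finS _ SE]) (auto simp: S_def)
    ultimately show ?thesis by (simp add: sum.distrib)
  qed
  also have "\<dots> \<le> EP b + Bg * Dg"
    using Inc_fin Bg(3) by (simp add: mult_left_mono)
  finally have "EP b' \<le> EP b + Bg * Dg" .
  moreover have "fst (node_step E x st) = a" by (simp add: st node_step_eq)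
  ultimately show ?thesis unfolding tr_split[of "node_step E x st"] tr_split[of st] b'_def by (simp add: st)
qed

end


context ipsl begin

lemma unitv_swap: "unitv y x = - unitv x y"
  unfolding unitv_def norm_minus_commute[of x y] by (metis minus_diff_eq scaleR_minus_right)

lemma edge_step_or_sym: "x \<noteq> y \<Longrightarrow> edge_step_or V0 y x st = edge_step_or V0 x y st"
proof -
  assume xy: "x \<noteq> y"
  obtain a b where st: "st = (a, b)" by fastforce
  have ins: "{y, x} = {x, y}" by (rule insert_commute)
  have s: "sgn (b {y, x} \<bullet> unitv y x) = - sgn (b {x, y} \<bullet> unitv x y)"
    unfolding ins unitv_swap[of y x] by (simp add: sgn_minus)
  show ?thesis unfolding st edge_step_or_def Let_def s
    using xy s by (auto intro!: ext)
qed

lemma edge_step_eq: "x \<noteq> y \<Longrightarrow> edge_step V0 {x, y} st = edge_step_or V0 x y st"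
  unfolding edge_step_def
proof (rule the_equality)
  assume xy: "x \<noteq> y"
  show "\<exists>a b. {x, y} = {a, b} \<and> a \<noteq> b \<and> edge_step_or V0 x y st = edge_step_or V0 a b st"
    using xy by blast
  fix g assume "\<exists>a b. {x, y} = {a, b} \<and> a \<noteq> b \<and> g = edge_step_or V0 a b st"
  then obtain a b where ab: "{x, y} = {a, b}" "a \<noteq> b" "g = edge_step_or V0 a b st" by blast
  from ab(1) have "(a = x \<and> b = y) \<or> (a = y \<and> b = x)" by (auto simp: doubleton_eq_iff)
  then show "g = edge_step_or V0 x y st"
    using ab(3) edge_step_or_sym[OF xy] by (cases st) auto
qed

lemma edge_step_props:
  assumes "\<epsilon> \<in> E"
  shows "\<exists>x y. x \<in> V \<and> y \<in> V \<and> snd (edge_step V0 \<epsilon> st) = snd st \<and>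
     (\<forall>z. z \<notin> {x, y} \<longrightarrow> fst (edge_step V0 \<epsilon> st) z = fst st z) \<and>
     (\<forall>z. \<bar>fst (edge_step V0 \<epsilon> st) z\<bar> \<le> \<bar>fst st z\<bar> + 1)"
proof -
  obtain x y where xy: "\<epsilon> = {x, y}" "x \<in> V" "y \<in> V" "x \<noteq> y" using gE[OF assms] by blast
  obtain a b where st: "st = (a, b)" by fastforce
  define s where "s = sgn (b {x, y} \<bullet> unitv x y)"
  have s1: "\<bar>s\<bar> \<le> 1" unfolding s_def by (simp add: abs_sgn_eq)
  have es: "edge_step V0 \<epsilon> st = (\<lambda>z. if z = x \<and> x \<in> V0 then a x + s
           else if z = y \<and> y \<in> V0 then a y - s else a z, b)"
    unfolding xy(1) edge_step_eq[OF xy(4)] st edge_step_or_def Let_def s_def by simp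
  show ?thesis
  proof (intro exI conjI allI impI)
    show "x \<in> V" "y \<in> V" by fact+
    show "snd (edge_step V0 \<epsilon> st) = snd st" unfolding es by (simp add: st)
    fix z
    show "z \<notin> {x, y} \<Longrightarrow> fst (edge_step V0 \<epsilon> st) z = fst st z" unfolding es by (simp add: st)
    show "\<bar>fst (edge_step V0 \<epsilon> st) z\<bar> \<le> \<bar>fst st z\<bar> + 1"
      using s1 unfolding es by (simp add: st abs_triangle_ineq4 abs_triangle_ineq order_trans[OF abs_triangle_ineq] order_trans[OF abs_triangle_ineq4])
  qed
qed

lemma edge_step_fin_tr:
  assumes "\<epsilon> \<in> E" "fin st"
  shows "fin (edge_step V0 \<epsilon> st) \<and> tr (edge_step V0 \<epsilon> st) \<le> tr st + 2 * Bg"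
proof -
  obtain x y where xy: "x \<in> V" "y \<in> V" and sn: "snd (edge_step V0 \<epsilon> st) = snd st"
    and fo: "\<And>z. z \<notin> {x, y} \<Longrightarrow> fst (edge_step V0 \<epsilon> st) z = fst st z"
    and fa: "\<And>z. \<bar>fst (edge_step V0 \<epsilon> st) z\<bar> \<le> \<bar>fst st z\<bar> + 1"
    using edge_step_props[OF assms(1), of st] by blast
  define a where "a = fst st"
  define a' where "a' = fst (edge_step V0 \<epsilon> st)"
  define S where "S = {z\<in>V. a z \<noteq> 0} \<union> {x, y}"
  have finS: "finite S" using assms(2) unfolding S_def fin_def a_def by auto
  have SV: "S \<subseteq> V" unfolding S_def using xy by auto
  have sub: "{z\<in>V. a' z \<noteq> 0} \<subseteq> S"
  proof
    fix z assume z: "z \<in> {z\<in>V. a' z \<noteq> 0}"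
    show "z \<in> S"
    proof (cases "z \<in> {x, y}")
      case False then show ?thesis using z fo[OF False] unfolding S_def a_def a'_def by simp
    qed (auto simp: S_def)
  qed
  have fin': "fin (edge_step V0 \<epsilon> st)"
    using assms(2) finite_subset[OF sub finS] sn unfolding fin_def a'_def by simp
  have "NP a' = (\<Sum>z\<in>S. \<bar>a' z\<bar> / m z)" by (rule NP_sup[OF finS sub SV])
  also have "\<dots> \<le> (\<Sum>z\<in>S. \<bar>a z\<bar> / m z + (if z \<in> {x, y} then Bg else 0))"
  proof (rule sum_mono)
    fix z assume z: "z \<in> S"
    then have mz: "m z > 0" "1 / m z \<le> Bg" using SV m_pos Bg by auto
    show "\<bar>a' z\<bar> / m z \<le> \<bar>a z\<bar> / m z + (if z \<in> {x, y} then Bg else 0)"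
    proof (cases "z \<in> {x, y}")
      case True
      have "\<bar>a' z\<bar> / m z \<le> (\<bar>a z\<bar> + 1) / m z"
        using fa[of z] mz by (simp add: a_def a'_def divide_right_mono)
      also have "\<dots> = \<bar>a z\<bar> / m z + 1 / m z" by (simp add: add_divide_distrib)
      finally show ?thesis using True mz by simp
    next
      case False then show ?thesis using fo[OF False] by (simp add: a_def a'_def)
    qed
  qed
  also have "\<dots> = NP a + (\<Sum>z\<in>{x, y}. Bg)"
  proof -
    have "(\<Sum>z\<in>S. (if z \<in> {x, y} then Bg else 0)) = (\<Sum>z\<in>{x, y}. Bg)"
      using finS by (subst sum.inter_restrict[symmetric]) (auto simp: S_def intro!: sum.cong)
    moreover have "NP a = (\<Sum>z\<in>S. \<bar>a z\<bar> / m z)"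
      by (rule NP_sup[OF finS _ SV]) (auto simp: S_def)
    ultimately show ?thesis by (simp add: sum.distrib)
  qed
  also have "\<dots> \<le> NP a + 2 * Bg"
  proof -
    have "(\<Sum>z\<in>{x, y}. Bg) = real (card {x, y}) * Bg" by simp
    also have "\<dots> \<le> 2 * Bg" using Bg(3)
      by (intro mult_right_mono) (auto simp: card_insert_if)
    finally show ?thesis by simp
  qed
  finally have "NP a' \<le> NP a + 2 * Bg" .
  then show ?thesis using fin' unfolding tr_split[of "edge_step V0 \<epsilon> st"] tr_split[of st] sn a_def a'_def
    by simp
qed

end


context ipsl begin

definition "Cg = Bg * Dg + 2 * Bg"
lemma Cg_nonneg: "Cg \<ge> 0" unfolding Cg_def using Bg(3) by simp

definition succ :: "'h ips_state \<Rightarrow> 'h ips_state set" where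
  "succ st = insert st ((\<lambda>x. node_step E x st) ` {x\<in>V. fst st x \<noteq> 0} \<union> (\<lambda>\<epsilon>. edge_step V0 \<epsilon> st) ` {\<epsilon>\<in>E. snd st \<epsilon> \<noteq> 0})"

lemma finite_succ: "fin st \<Longrightarrow> finite (succ st)"
  unfolding succ_def fin_def by simp

lemma succ_fin_tr: assumes "fin st" "s \<in> succ st" shows "fin s \<and> tr s \<le> tr st + Cg"
proof -
  have b: "Bg * Dg \<ge> 0" "Bg \<ge> 0" using Bg(3) by auto
  from assms(2) consider "s = st" | x where "s = node_step E x st" | \<epsilon> where "\<epsilon> \<in> E" "s = edge_step V0 \<epsilon> st"
    unfolding succ_def by blast
  then show ?thesis
  proof cases
    case 1 then show ?thesis using assms(1) Cg_nonneg by simp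
  next
    case (2 x)
    have "tr (node_step E x st) \<le> tr st + Bg * Dg" by (rule node_step_tr[OF assms(1)])
    then show ?thesis using node_step_fin[OF assms(1), of x] b 2 unfolding Cg_def by simp
  next
    case (3 \<epsilon>)
    have e: "fin s" "tr s \<le> tr st + 2 * Bg" using edge_step_fin_tr[OF 3(1) assms(1)] 3(2) by auto
    have "tr s \<le> tr st + Cg" using e(2) b(1) unfolding Cg_def by linarith
    then show ?thesis using e(1) by simp
  qed
qed

lemma jp_sum: assumes "fin st" shows "(\<Sum>s\<in>succ st. jp st s) = 1"
proof -
  obtain a b where st: "st = (a, b)" by fastforce
  define X where "X = {x\<in>V. a x \<noteq> 0}"
  define Y where "Y = {\<epsilon>\<in>E. b \<epsilon> \<noteq> 0}"
  have fX: "finite X" and fY: "finite Y" using assms unfolding fin_def X_def Y_def st by auto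
  have fS: "finite (succ st)" using finite_succ[OF assms] .
  have jr: "\<And>s. jump_rate V E k m V0 st s = (\<Sum>x\<in>X. if node_step E x st = s then \<bar>a x\<bar> / m x else 0)
      + (\<Sum>\<epsilon>\<in>Y. if edge_step V0 \<epsilon> st = s then k \<epsilon> * norm (b \<epsilon>) else 0)"
    unfolding jump_rate_def X_def Y_def st by simp
  have trX: "tr st = (\<Sum>x\<in>X. \<bar>a x\<bar> / m x) + (\<Sum>\<epsilon>\<in>Y. k \<epsilon> * norm (b \<epsilon>))"
    unfolding total_rate_def X_def Y_def st by simp
  have inX: "\<And>x. x \<in> X \<Longrightarrow> node_step E x st \<in> succ st" unfolding succ_def X_def st by auto
  have inY: "\<And>\<epsilon>. \<epsilon> \<in> Y \<Longrightarrow> edge_step V0 \<epsilon> st \<in> succ st" unfolding succ_def Y_def st by auto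
  have sumjr: "(\<Sum>s\<in>succ st. jump_rate V E k m V0 st s) = tr st"
  proof -
    have "(\<Sum>s\<in>succ st. jump_rate V E k m V0 st s) =
       (\<Sum>x\<in>X. \<Sum>s\<in>succ st. if node_step E x st = s then \<bar>a x\<bar> / m x else 0)
     + (\<Sum>\<epsilon>\<in>Y. \<Sum>s\<in>succ st. if edge_step V0 \<epsilon> st = s then k \<epsilon> * norm (b \<epsilon>) else 0)"
      unfolding jr sum.distrib by (simp add: sum.swap[of _ "succ st"])
    also have "\<dots> = (\<Sum>x\<in>X. \<bar>a x\<bar> / m x) + (\<Sum>\<epsilon>\<in>Y. k \<epsilon> * norm (b \<epsilon>))"
      using fS inX inY by (simp add: sum.delta')
    finally show ?thesis using trX by simp
  qed
  show ?thesis
  proof (cases "tr st = 0")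
    case True
    then have "(\<Sum>s\<in>succ st. jp st s) = (\<Sum>s\<in>succ st. if st = s then 1 else 0)"
      unfolding jump_prob_def by (intro sum.cong) auto
    also have "\<dots> = 1" using fS by (simp add: succ_def)
    finally show ?thesis .
  next
    case False
    then have "(\<Sum>s\<in>succ st. jp st s) = (\<Sum>s\<in>succ st. jump_rate V E k m V0 st s) / tr st"
      unfolding jump_prob_def by (simp add: sum_divide_distrib)
    then show ?thesis using sumjr False by simp
  qed
qed

end


context ipsl begin

primrec Lp :: "nat \<Rightarrow> (nat \<Rightarrow> 'h ips_state) set" where
  "Lp 0 = {\<lambda>_. f}"
| "Lp (Suc n) = (\<lambda>(g, s). g(Suc n := s)) ` (SIGMA g:Lp n. succ (g n))"

lemma fin_f: "fin f"
proof -
  obtain a b where fab: "f = (a, b)" by fastforce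
  from fF0 have "finite {x. a x \<noteq> 0}" "finite {\<epsilon>. b \<epsilon> \<noteq> 0}" unfolding F0_def fab by auto
  then show ?thesis unfolding fin_def fab by (auto intro: finite_subset)
qed

lemma Lp_inv: "finite (Lp n) \<and> (\<forall>g\<in>Lp n. g 0 = f \<and> (\<forall>i>n. g i = f) \<and> (\<forall>i\<le>n. fin (g i) \<and> tr (g i) \<le> tr f + Cg * i))"
proof (induction n)
  case 0
  then show ?case using fin_f by simp
next
  case (Suc n)
  have fin1: "finite (SIGMA g:Lp n. succ (g n))"
    using Suc.IH finite_succ by (intro finite_SigmaI) auto
  have "\<forall>g'\<in>Lp (Suc n). g' 0 = f \<and> (\<forall>i>Suc n. g' i = f) \<and> (\<forall>i\<le>Suc n. fin (g' i) \<and> tr (g' i) \<le> tr f + Cg * i)"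
  proof
    fix g' assume "g' \<in> Lp (Suc n)"
    then obtain g s where g: "g \<in> Lp n" and s: "s \<in> succ (g n)" and g': "g' = g(Suc n := s)" by auto
    have gi: "g 0 = f" "\<forall>i>n. g i = f" "\<forall>i\<le>n. fin (g i) \<and> tr (g i) \<le> tr f + Cg * i"
      using Suc.IH g by auto
    have "fin s \<and> tr s \<le> tr (g n) + Cg" using succ_fin_tr[OF _ s] gi(3) by auto
    then have sn: "fin s \<and> tr s \<le> tr f + Cg * Suc n" using gi(3) by (auto simp: algebra_simps)
    show "g' 0 = f \<and> (\<forall>i>Suc n. g' i = f) \<and> (\<forall>i\<le>Suc n. fin (g' i) \<and> tr (g' i) \<le> tr f + Cg * i)"
      using gi sn unfolding g' by (auto simp: le_Suc_eq)
  qed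
  then show ?case using fin1 by simp
qed

lemma P0_upd:
  assumes "g \<in> Lp n"
  shows "P0 (g(Suc n := s)) (Suc n) = P0 g n * jp (g n) s"
proof -
  have a: "{1..Suc n} = insert (Suc n) {1..n}" by auto
  have "(\<Prod>i\<in>{1..n}. jp ((g(Suc n := s)) (i - 1)) ((g(Suc n := s)) i)) = (\<Prod>i\<in>{1..n}. jp (g (i - 1)) (g i))"
    by (intro prod.cong) auto
  then show ?thesis unfolding P0_def a by simp
qed

lemma Lp_sum: "(\<Sum>g\<in>Lp n. P0 g n) = 1"
proof (induction n)
  case 0
  then show ?case by (simp add: P0_def)
next
  case (Suc n)
  have inv: "finite (Lp n)" "\<And>g. g \<in> Lp n \<Longrightarrow> g (Suc n) = f \<and> fin (g n)"
    using Lp_inv[of n] by auto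
  have inj: "inj_on (\<lambda>(g, s). g(Suc n := s)) (SIGMA g:Lp n. succ (g n))"
  proof (rule inj_onI, clarify)
    fix g s g2 s2 assume a: "g \<in> Lp n" "g2 \<in> Lp n" "g(Suc n := s) = g2(Suc n := s2)"
    have "s = s2" using fun_cong[OF a(3), of "Suc n"] by simp
    moreover have "g = g2"
    proof
      fix i show "g i = g2 i"
        using fun_cong[OF a(3), of i] inv(2)[OF a(1)] inv(2)[OF a(2)] by (cases "i = Suc n") auto
    qed
    ultimately show "g = g2 \<and> s = s2" by simp
  qed
  have "(\<Sum>g'\<in>Lp (Suc n). P0 g' (Suc n)) = (\<Sum>(g, s)\<in>(SIGMA g:Lp n. succ (g n)). P0 (g(Suc n := s)) (Suc n))"
    unfolding Lp.simps(2) by (subst sum.reindex[OF inj]) (simp add: case_prod_unfold)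
  also have "\<dots> = (\<Sum>(g, s)\<in>(SIGMA g:Lp n. succ (g n)). P0 g n * jp (g n) s)"
    by (intro sum.cong) (auto simp: P0_upd)
  also have "\<dots> = (\<Sum>g\<in>Lp n. \<Sum>s\<in>succ (g n). P0 g n * jp (g n) s)"
    by (rule sum.Sigma[symmetric]) (use inv finite_succ in auto)
  also have "\<dots> = (\<Sum>g\<in>Lp n. P0 g n)"
    by (intro sum.cong) (auto simp: sum_distrib_left[symmetric] jp_sum inv)
  finally show ?case using Suc.IH by simp
qed

end


context ipsl begin

definition "A0 = tr f + Cg + 1"
definition "\<delta> i = 1 / (A0 * real i)"

lemma A0_pos: "A0 > 0" unfolding A0_def using tr_nonneg[of f] Cg_nonneg by linarith

lemma delta_nonneg: "\<delta> i \<ge> 0" unfolding \<delta>_def using A0_pos by simp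

lemma E_bounds:
  assumes g: "g \<in> Lp n" and i: "i \<in> {1..n}"
  shows "exp (-1) \<le> exp (- tr (g (i - 1)) * \<delta> i) \<and> exp (- tr (g (i - 1)) * \<delta> i) \<le> 1"
proof -
  have "\<forall>j\<le>n. fin (g j) \<and> tr (g j) \<le> tr f + Cg * real j" using Lp_inv[of n] g by blast
  then have "tr (g (i - 1)) \<le> tr f + Cg * real (i - 1)" using i by (meson atLeastAtMost_iff diff_le_self le_trans)
  also have "\<dots> \<le> A0 * real i"
  proof -
    have "tr f \<le> tr f * real i" using tr_nonneg[of f] i by (simp add: mult_le_cancel_left1)
    moreover have "Cg * real (i - 1) \<le> Cg * real i" using Cg_nonneg by (simp add: mult_left_mono)
    moreover have "real i \<ge> 0" by simp
    ultimately show ?thesis unfolding A0_def by (simp add: algebra_simps)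
  qed
  finally have le: "tr (g (i - 1)) \<le> A0 * real i" .
  have pos: "A0 * real i > 0" using A0_pos i by simp
  have "tr (g (i - 1)) * \<delta> i \<le> 1" unfolding \<delta>_def using le pos by (simp add: divide_le_eq_1)
  moreover have "tr (g (i - 1)) * \<delta> i \<ge> 0" using tr_nonneg delta_nonneg by simp
  ultimately show ?thesis by simp
qed

definition "Gn n = (\<Union>g\<in>Lp n. Ev g n {} (\<lambda>_. 0))"

lemma Gn_sets[measurable]: "Gn n \<in> sets M"
  unfolding Gn_def using Lp_inv[of n] by (intro sets.finite_UN) auto

lemma Lp_disj: "g \<in> Lp n \<Longrightarrow> g' \<in> Lp n \<Longrightarrow> g \<noteq> g' \<Longrightarrow> \<exists>i\<le>n. g i \<noteq> g' i"
  using Lp_inv[of n] by (metis ext not_le)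

lemma Gn_measure: "prob (Gn n) = 1"
proof -
  have "prob (Gn n) = (\<Sum>g\<in>Lp n. prob (Ev g n {} (\<lambda>_. 0)))"
    unfolding Gn_def
  proof (rule finite_measure_finite_Union)
    show "finite (Lp n)" using Lp_inv by auto
    show "(\<lambda>g. Ev g n {} (\<lambda>_. 0)) ` Lp n \<subseteq> sets M" by auto
    show "disjoint_family_on (\<lambda>g. Ev g n {} (\<lambda>_. 0)) (Lp n)"
      unfolding disjoint_family_on_def
    proof (intro ballI impI)
      fix g g' assume "g \<in> Lp n" "g' \<in> Lp n" "g \<noteq> g'"
      then obtain i where "i \<le> n" "g i \<noteq> g' i" using Lp_disj by blast
      then show "Ev g n {} (\<lambda>_. 0) \<inter> Ev g' n {} (\<lambda>_. 0) = {}" unfolding Ev_def by auto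
    qed
  qed
  also have "\<dots> = (\<Sum>g\<in>Lp n. P0 g n)"
    by (intro sum.cong refl) (simp add: Ev_measure)
  finally show ?thesis using Lp_sum by simp
qed

lemma Gn_compl: "prob (space M - Gn n) = 0"
  using prob_compl[OF Gn_sets] Gn_measure by simp

end


context ipsl begin

definition "Eg g i = exp (- tr (g (i - 1)) * \<delta> i)"
definition "qf i = 1 - exp (-1) * (1 - exp (- 1 / real i))"

lemma P0_nonneg: "P0 g n \<ge> 0"
proof -
  have "prob (Ev g n {} (\<lambda>_. 0)) = P0 g n" by (simp add: Ev_measure)
  then show ?thesis using measure_nonneg by metis
qed

lemma A0_delta: "i \<ge> 1 \<Longrightarrow> A0 * \<delta> i = 1 / real i"
  unfolding \<delta>_def using A0_pos by simp

lemma per_g: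
  assumes g: "g \<in> Lp n" and T: "T \<ge> 0"
  shows "(\<Sum>J\<in>{J\<in>Pow {1..n}. (\<Sum>i\<in>{1..n}-J. \<delta> i) \<le> T}. prob (Ev g n J \<delta>))
     \<le> P0 g n * exp (A0 * T) * (\<Prod>i\<in>{1..n}. qf i)"
proof -
  let ?W = "{J\<in>Pow {1..n}. (\<Sum>i\<in>{1..n}-J. \<delta> i) \<le> T}"
  let ?F = "\<lambda>J. P0 g n * (exp (A0 * T) * (\<Prod>i\<in>{1..n}-J. Eg g i * exp (- A0 * \<delta> i))) * (\<Prod>i\<in>J. 1 - Eg g i)"
  have Eb: "\<And>i. i \<in> {1..n} \<Longrightarrow> exp (-1) \<le> Eg g i \<and> Eg g i \<le> 1"
    using E_bounds[OF g] unfolding Eg_def by blast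
  have dn: "\<And>i. \<delta> i \<ge> 0" by (rule delta_nonneg)
  have "(\<Sum>J\<in>?W. prob (Ev g n J \<delta>)) = (\<Sum>J\<in>?W. P0 g n * (\<Prod>i\<in>{1..n}-J. Eg g i) * (\<Prod>i\<in>J. 1 - Eg g i))"
  proof (intro sum.cong refl)
    fix J assume J: "J \<in> ?W"
    then have fJ: "finite J" "J \<subseteq> {1..n}" by (auto intro: finite_subset)
    show "prob (Ev g n J \<delta>) = P0 g n * (\<Prod>i\<in>{1..n}-J. Eg g i) * (\<Prod>i\<in>J. 1 - Eg g i)"
      unfolding Eg_def by (rule Ev_measure[OF fJ]) (simp add: dn)
  qed
  also have "\<dots> \<le> (\<Sum>J\<in>?W. ?F J)"
  proof (rule sum_mono)
    fix J assume J: "J \<in> ?W"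
    show "P0 g n * (\<Prod>i\<in>{1..n}-J. Eg g i) * (\<Prod>i\<in>J. 1 - Eg g i) \<le> ?F J"
    proof -
    let ?K = "{1..n} - J"
      have "(\<Prod>i\<in>?K. Eg g i * exp (- A0 * \<delta> i)) = (\<Prod>i\<in>?K. Eg g i) * exp (- A0 * (\<Sum>i\<in>?K. \<delta> i))"
        by (simp add: prod.distrib exp_sum sum_distrib_left)
      then have eq: "exp (A0 * T) * (\<Prod>i\<in>?K. Eg g i * exp (- A0 * \<delta> i)) = (\<Prod>i\<in>?K. Eg g i) * exp (A0 * (T - (\<Sum>i\<in>?K. \<delta> i)))"
        by (simp add: right_diff_distrib exp_diff exp_minus field_simps)
      have "exp (A0 * (T - (\<Sum>i\<in>?K. \<delta> i))) \<ge> 1" using J A0_pos by simp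
      moreover have "(\<Prod>i\<in>?K. Eg g i) \<ge> 0" using Eb by (intro prod_nonneg) (auto simp: Eg_def)
      ultimately have "(\<Prod>i\<in>?K. Eg g i) \<le> exp (A0 * T) * (\<Prod>i\<in>?K. Eg g i * exp (- A0 * \<delta> i))"
        unfolding eq by (simp add: mult_le_cancel_left1)
      moreover have "(\<Prod>i\<in>J. 1 - Eg g i) \<ge> 0" using Eb J by (intro prod_nonneg) auto
      ultimately show ?thesis
        using P0_nonneg[of g n] by (intro mult_right_mono mult_left_mono) auto
    qed
  qed
  also have "\<dots> \<le> (\<Sum>J\<in>Pow {1..n}. ?F J)"
  proof (rule sum_mono2)
    show "finite (Pow {1..n})" by simp
    show "?W \<subseteq> Pow {1..n}" by auto
    fix J assume J: "J \<in> Pow {1..n} - ?W"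
    have "(\<Prod>i\<in>{1..n}-J. Eg g i * exp (- A0 * \<delta> i)) \<ge> 0" using Eb by (intro prod_nonneg) (auto simp: Eg_def)
    moreover have "(\<Prod>i\<in>J. 1 - Eg g i) \<ge> 0" using Eb J by (intro prod_nonneg) auto
    ultimately show "0 \<le> ?F J" using P0_nonneg[of g n] by simp
  qed
  also have "\<dots> = P0 g n * exp (A0 * T) * (\<Sum>J\<in>Pow {1..n}. (\<Prod>i\<in>J. 1 - Eg g i) * (\<Prod>i\<in>{1..n}-J. Eg g i * exp (- A0 * \<delta> i)))"
    unfolding sum_distrib_left by (intro sum.cong refl) (simp only: mult_ac)
  also have "\<dots> = P0 g n * exp (A0 * T) * (\<Prod>i\<in>{1..n}. (1 - Eg g i) + Eg g i * exp (- A0 * \<delta> i))"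
    by (subst prod_add[OF finite_atLeastAtMost]) (rule refl)
  also have "\<dots> \<le> P0 g n * exp (A0 * T) * (\<Prod>i\<in>{1..n}. qf i)"
  proof -
    have "(\<Prod>i\<in>{1..n}. (1 - Eg g i) + Eg g i * exp (- A0 * \<delta> i)) \<le> (\<Prod>i\<in>{1..n}. qf i)"
    proof (rule prod_mono)
      fix i assume i: "i \<in> {1..n}"
      have ex: "exp (- A0 * \<delta> i) = exp (- 1 / real i)" using A0_delta[of i] i by simp
      have u: "0 \<le> 1 - exp (- 1 / real i)" "exp (- 1 / real i) \<le> 1" by auto
      have "(1 - Eg g i) + Eg g i * exp (- A0 * \<delta> i) = 1 - Eg g i * (1 - exp (- 1 / real i))"
        unfolding ex by (simp add: algebra_simps)
      moreover have "exp (-1) * (1 - exp (- 1 / real i)) \<le> Eg g i * (1 - exp (- 1 / real i))"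
        using Eb[OF i] u by (intro mult_right_mono) auto
      moreover have "Eg g i * (1 - exp (- 1 / real i)) \<le> 1"
        using Eb[OF i] u by (intro mult_le_one) auto
      ultimately show "0 \<le> (1 - Eg g i) + Eg g i * exp (- A0 * \<delta> i) \<and> (1 - Eg g i) + Eg g i * exp (- A0 * \<delta> i) \<le> qf i"
        unfolding qf_def by linarith
    qed
    moreover have "P0 g n * exp (A0 * T) \<ge> 0" using P0_nonneg by simp
    ultimately show ?thesis by (simp add: mult_left_mono)
  qed
  finally show ?thesis .
qed

end


context ipsl begin

lemma Qbound:
  assumes T: "T \<ge> 0"
  shows "prob {\<omega>\<in>space M. (\<Sum>i\<in>{1..n}. \<xi> i \<omega>) \<le> ennreal T} \<le> exp (A0 * T) * (\<Prod>i\<in>{1..n}. qf i)"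
proof -
  let ?Q = "{\<omega>\<in>space M. (\<Sum>i\<in>{1..n}. \<xi> i \<omega>) \<le> ennreal T}"
  let ?W = "{J\<in>Pow {1..n}. (\<Sum>i\<in>{1..n}-J. \<delta> i) \<le> T}"
  let ?U = "\<lambda>g. \<Union>J\<in>?W. Ev g n J \<delta>"
  have finL: "finite (Lp n)" using Lp_inv by auto
  have finW: "finite ?W" by auto
  have Qs: "?Q \<in> sets M" by measurable
  have Us: "\<And>g. ?U g \<in> sets M" using finW by (intro sets.finite_UN) auto
  have UUs: "(\<Union>g\<in>Lp n. ?U g) \<in> sets M" using finL Us by (intro sets.finite_UN) auto
  have sub: "?Q \<subseteq> (space M - Gn n) \<union> (\<Union>g\<in>Lp n. ?U g)"
  proof
    fix \<omega> assume w: "\<omega> \<in> ?Q"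
    show "\<omega> \<in> (space M - Gn n) \<union> (\<Union>g\<in>Lp n. ?U g)"
    proof (cases "\<omega> \<in> Gn n")
      case False then show ?thesis using w by auto
    next
      case True
      then obtain g where g: "g \<in> Lp n" and wg: "\<omega> \<in> Ev g n {} (\<lambda>_. 0)" unfolding Gn_def by auto
      have path: "\<forall>i\<le>n. h i \<omega> = g i" and pos: "\<forall>i\<in>{1..n}. 0 < \<xi> i \<omega>" and sp: "\<omega> \<in> space M"
        using wg unfolding Ev_def by auto
      define J where "J = {i\<in>{1..n}. \<xi> i \<omega> \<le> ennreal (\<delta> i)}"
      have inEv: "\<omega> \<in> Ev g n J \<delta>"
        unfolding Ev_def J_def using path pos sp by (auto simp: not_le)
      have "ennreal (\<Sum>i\<in>{1..n}-J. \<delta> i) = (\<Sum>i\<in>{1..n}-J. ennreal (\<delta> i))"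
        using delta_nonneg by simp
      also have "\<dots> \<le> (\<Sum>i\<in>{1..n}-J. \<xi> i \<omega>)"
        by (intro sum_mono) (auto simp: J_def not_le intro: less_imp_le)
      also have "\<dots> \<le> (\<Sum>i\<in>{1..n}. \<xi> i \<omega>)"
        by (intro sum_mono2) auto
      also have "\<dots> \<le> ennreal T" using w by simp
      finally have "(\<Sum>i\<in>{1..n}-J. \<delta> i) \<le> T" using T by simp
      then have "J \<in> ?W" unfolding J_def by auto
      then show ?thesis using inEv g by blast
    qed
  qed
  have "prob ?Q \<le> prob ((space M - Gn n) \<union> (\<Union>g\<in>Lp n. ?U g))"
    using sub UUs by (intro finite_measure_mono) auto
  also have "\<dots> \<le> prob (space M - Gn n) + prob (\<Union>g\<in>Lp n. ?U g)"
    using UUs by (intro measure_subadditive) auto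
  also have "\<dots> = prob (\<Union>g\<in>Lp n. ?U g)" using Gn_compl by simp
  also have "\<dots> \<le> (\<Sum>g\<in>Lp n. prob (?U g))"
    using finL Us by (intro finite_measure_subadditive_finite) auto
  also have "\<dots> \<le> (\<Sum>g\<in>Lp n. \<Sum>J\<in>?W. prob (Ev g n J \<delta>))"
    using finW by (intro sum_mono finite_measure_subadditive_finite) auto
  also have "\<dots> \<le> (\<Sum>g\<in>Lp n. P0 g n * exp (A0 * T) * (\<Prod>i\<in>{1..n}. qf i))"
    using per_g[OF _ T] by (intro sum_mono) auto
  also have "\<dots> = exp (A0 * T) * (\<Prod>i\<in>{1..n}. qf i)"
    using Lp_sum[of n] by (simp add: sum_distrib_right[symmetric])
  finally show ?thesis .
qed

lemma qf_bound: "i \<ge> 1 \<Longrightarrow> 0 \<le> qf i \<and> qf i \<le> exp (- (exp (-1) / 2) * (1 / real i))"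
proof -
  assume i: "i \<ge> 1"
  define u where "u = 1 / real i"
  have u: "0 < u" "u \<le> 1" using i unfolding u_def by auto
  have e1: "exp u \<ge> 1 + u" by (rule exp_ge_add_one_self)
  have "exp (- u) = 1 / exp u" by (simp add: exp_minus inverse_eq_divide)
  also have "\<dots> \<le> 1 / (1 + u)" using e1 u by (intro divide_left_mono) auto
  finally have "exp (- u) \<le> 1 / (1 + u)" .
  moreover have "1 - 1 / (1 + u) = u / (1 + u)" using u by (simp add: field_simps)
  ultimately have "1 - exp (- u) \<ge> u / (1 + u)" by linarith
  moreover have "u / (1 + u) \<ge> u / 2" using u by (intro divide_left_mono) auto
  ultimately have a: "1 - exp (- u) \<ge> u / 2" by linarith
  have b: "1 - exp (-u) \<le> 1" by simp
  have c: "0 < exp (-1::real)" "exp (-1::real) \<le> 1" by auto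
  have q: "qf i = 1 - exp (-1) * (1 - exp (- u))" unfolding qf_def u_def by simp
  have m1: "exp (-1) * (1 - exp (- u)) \<ge> exp (-1) * (u / 2)" using a c by (intro mult_left_mono) auto
  have m2: "exp (-1) * (1 - exp (- u)) \<le> 1" using b c a u by (intro mult_le_one) auto
  have m3: "1 - exp (-1) * (u / 2) \<le> exp (- (exp (-1) * (u / 2)))"
    using exp_ge_add_one_self[of "- (exp (-1) * (u / 2))"] by linarith
  have m4: "- (exp (-1) / 2) * (1 / real i) = - (exp (-1) * (u / 2))" unfolding u_def by simp
  show ?thesis unfolding q m4 using m1 m2 m3 by linarith
qed

lemma prod_qf: "(\<Prod>i\<in>{1..n}. qf i) \<le> exp (- (exp (-1) / 2) * harm n)"
proof -
  have "(\<Prod>i\<in>{1..n}. qf i) \<le> (\<Prod>i\<in>{1..n}. exp (- (exp (-1) / 2) * (1 / real i)))"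
    using qf_bound by (intro prod_mono) auto
  also have "\<dots> = exp (\<Sum>i\<in>{1..n}. - (exp (-1) / 2) * (1 / real i))" by (rule exp_sum[symmetric]) simp
  also have "(\<Sum>i\<in>{1..n}. - (exp (-1) / 2) * (1 / real i)) = - (exp (-1) / 2) * (\<Sum>i\<in>{1..n}. 1 / real i)"
    by (rule sum_distrib_left[symmetric])
  also have "(\<Sum>i\<in>{1..n}. 1 / real i) = harm n"
    unfolding harm_def by (simp add: inverse_eq_divide)
  finally show ?thesis .
qed

end


context ipsl begin

lemma partial_le: "(\<Sum>i\<in>{1..n}. \<xi> i \<omega>) \<le> (\<Sum>j. \<xi> (Suc j) \<omega>)"
proof -
  have img: "{1..n} = Suc ` {..<n}"
  proof (rule set_eqI)
    fix x show "x \<in> {1..n} \<longleftrightarrow> x \<in> Suc ` {..<n}"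
    proof
      assume "x \<in> {1..n}" then have "x = Suc (x - 1)" "x - 1 < n" by auto
      then show "x \<in> Suc ` {..<n}" by blast
    qed auto
  qed
  have "(\<Sum>i\<in>{1..n}. \<xi> i \<omega>) = (\<Sum>j<n. \<xi> (Suc j) \<omega>)"
    unfolding img by (subst sum.reindex) auto
  also have "\<dots> \<le> (\<Sum>j. \<xi> (Suc j) \<omega>)"
    by (rule sum_le_suminf[OF summableI]) auto
  finally show ?thesis .
qed

lemma div_mul_aux: "(c::real) > 0 \<Longrightarrow> a / c * c = a" by simp

lemma null_T:
  assumes T: "T \<ge> 0"
  shows "prob {\<omega>\<in>space M. (\<Sum>j. \<xi> (Suc j) \<omega>) \<le> ennreal T} = 0"
proof -
  let ?R = "{\<omega>\<in>space M. (\<Sum>j. \<xi> (Suc j) \<omega>) \<le> ennreal T}"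
  let ?c = "exp (-1) / 2 :: real"
  have c: "?c > 0" by simp
  have bnd: "prob ?R \<le> exp (A0 * T) * exp (- ?c * harm n)" for n
  proof -
    have "?R \<subseteq> {\<omega>\<in>space M. (\<Sum>i\<in>{1..n}. \<xi> i \<omega>) \<le> ennreal T}"
    proof
      fix \<omega> assume "\<omega> \<in> ?R"
      then show "\<omega> \<in> {\<omega>\<in>space M. (\<Sum>i\<in>{1..n}. \<xi> i \<omega>) \<le> ennreal T}"
        using order_trans[OF partial_le[where n=n and \<omega>=\<omega>]] by blast
    qed
    then have "prob ?R \<le> prob {\<omega>\<in>space M. (\<Sum>i\<in>{1..n}. \<xi> i \<omega>) \<le> ennreal T}"
      by (intro finite_measure_mono) measurable
    also have "\<dots> \<le> exp (A0 * T) * (\<Prod>i\<in>{1..n}. qf i)" by (rule Qbound[OF T])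
    also have "\<dots> \<le> exp (A0 * T) * exp (- ?c * harm n)"
      using prod_qf by (intro mult_left_mono) auto
    finally show ?thesis .
  qed
  show ?thesis
  proof (rule ccontr)
    assume "prob ?R \<noteq> 0"
    then have pos: "prob ?R > 0" using measure_nonneg[of M ?R] by linarith
    define K where "K = (A0 * T - ln (prob ?R)) / ?c"
    have ev: "\<forall>Z. eventually (\<lambda>n. Z < (harm n :: real)) sequentially"
      using filterlim_at_top_dense[THEN iffD1, OF harm_at_top] .
    then have "eventually (\<lambda>n. K < (harm n :: real)) sequentially" by (rule spec)
    then obtain N where "\<forall>n\<ge>N. K < (harm n :: real)"
      unfolding eventually_sequentially by blast
    then have n: "K < harm N" by blast
    have "K * ?c < harm N * ?c" using n c by (rule mult_strict_right_mono)
    moreover have "K * ?c = A0 * T - ln (prob ?R)" unfolding K_def using c by (rule div_mul_aux)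
    ultimately have "A0 * T - ln (prob ?R) < ?c * harm N" by (simp only: mult.commute)
    then have "A0 * T - ?c * harm N < ln (prob ?R)" by linarith
    then have "exp (A0 * T - ?c * harm N) < exp (ln (prob ?R))" by (simp only: exp_less_cancel_iff)
    then have "exp (A0 * T - ?c * harm N) < prob ?R" by (simp only: exp_ln[OF pos])
    moreover have "exp (A0 * T) * exp (- ?c * harm N) = exp (A0 * T - ?c * harm N)"
      by (simp only: exp_add[symmetric] diff_conv_add_uminus mult_minus_left)
    ultimately show False using bnd[of N] by linarith
  qed
qed

lemma main: "prob {\<omega> \<in> space M. (\<Sum>n. \<xi> (Suc n) \<omega>) = \<infinity>} = 1"
proof -
  define B where "B N = {\<omega>\<in>space M. (\<Sum>j. \<xi> (Suc j) \<omega>) \<le> ennreal (real N)}" for N :: nat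
  have Bs: "B N \<in> sets M" for N unfolding B_def by measurable
  have Bn: "B N \<in> null_sets M" for N
    using null_T[of "real N"] Bs[of N] by (intro null_setsI) (simp_all add: emeasure_eq_measure B_def)
  have Un: "(\<Union>N. B N) \<in> null_sets M" using Bn by blast
  have eq: "{\<omega> \<in> space M. (\<Sum>n. \<xi> (Suc n) \<omega>) = \<infinity>} = space M - (\<Union>N. B N)"
  proof (rule set_eqI)
    fix \<omega>
    show "\<omega> \<in> {\<omega> \<in> space M. (\<Sum>n. \<xi> (Suc n) \<omega>) = \<infinity>} \<longleftrightarrow> \<omega> \<in> space M - (\<Union>N. B N)"
    proof
      assume "\<omega> \<in> {\<omega> \<in> space M. (\<Sum>n. \<xi> (Suc n) \<omega>) = \<infinity>}"
      then show "\<omega> \<in> space M - (\<Union>N. B N)" unfolding B_def by (auto simp: top_unique)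
    next
      assume a: "\<omega> \<in> space M - (\<Union>N. B N)"
      show "\<omega> \<in> {\<omega> \<in> space M. (\<Sum>n. \<xi> (Suc n) \<omega>) = \<infinity>}"
      proof (rule ccontr)
        assume "\<omega> \<notin> {\<omega> \<in> space M. (\<Sum>n. \<xi> (Suc n) \<omega>) = \<infinity>}"
        then have "(\<Sum>n. \<xi> (Suc n) \<omega>) < top" using a by (auto simp: top_unique less_top)
        then obtain N where "(\<Sum>n. \<xi> (Suc n) \<omega>) < of_nat N" using ennreal_Ex_less_of_nat by blast
        then have "\<omega> \<in> B N" using a unfolding B_def by (auto simp: ennreal_of_nat_eq_real_of_nat intro: less_imp_le)
        then show False using a by blast
      qed
    qed
  qed
  have "prob (\<Union>N. B N) = 0" using Un by (simp add: measure_def null_setsD1)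
  then show ?thesis unfolding eq using prob_compl[of "\<Union>N. B N"] Un by auto
qed

end

theorem theorem2p1:
  fixes V :: "'h::{real_inner,complete_space} set"
    and E :: "'h set set" and k :: "'h set \<Rightarrow> real" and m :: "'h \<Rightarrow> real" and V0 :: "'h set"
    and f :: "'h ips_state"
    and M :: "'w measure" and h :: "nat \<Rightarrow> 'w \<Rightarrow> 'h ips_state" and \<xi> :: "nat \<Rightarrow> 'w \<Rightarrow> ennreal"
  assumes "good_graph V E k m V0"
    and "f \<in> F0 V E"
    and "is_IPS V E k m V0 f M h \<xi>"
  shows "measure M {\<omega> \<in> space M. (\<Sum>n. \<xi> (Suc n) \<omega>) = \<infinity>} = 1"
proof -
  interpret ipsl V E k m V0 f M h \<xi> by unfold_locales (fact assms)+
  show ?thesis by (rule main)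
qed

end
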